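(* Let $a_1,\dots,a_m\in\mathbb R^n$ satisfy $\mathbb E_{i\in[m]}\|a_i\|_2^4\ge1$ and let $A=\sum_{i=1}^m e_ia_i^T/\sqrt n$. Then $\|A\|_{2\to4}\ge\left(\frac{3}{1+2/n}\right)^{1/4}$.
   Context: $e_i$ is the $i$-th standard basis vector of $\mathbb R^m$, so $(Ax)_i=\frac1{\sqrt n}\sum_{j}a_{i,j}x_j$. Norms are expectation norms: for $v\in\mathbb R^N$, $\|v\|_p=(\frac1N\sum_{j}|v_j|^p)^{1/p}$, and $\|A\|_{2\to4}=\max_{x\ne0}\|Ax\|_4/\|x\|_2$; $\mathbb E_{i\in[m]}$ is the uniform average over $i$. *)

theory Defs
  imports "HOL-Analysis.Analysis"
begin

definition exp_pnorm :: "real \<Rightarrow> real ^ 'n::finite \<Rightarrow> real" where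
  "exp_pnorm p v = ((\<Sum>j\<in>UNIV. \<bar>v $ j\<bar> powr p) / real CARD('n)) powr (1 / p)"

definition norm_2_to_4 :: "real ^ 'n::finite ^ 'm::finite \<Rightarrow> real" where
  "norm_2_to_4 A = Sup {exp_pnorm 4 (A *v x) / exp_pnorm 2 x | x. x \<noteq> 0}"

end

theory Submission imports Defs begin
definition sg :: "('n \<Rightarrow> bool) \<Rightarrow> 'n \<Rightarrow> real" where
  "sg s j = (if s j then 1 else -1)"

lemma sg_sq[simp]: "sg s j * sg s j = 1" by (simp add: sg_def)

lemma sg_flip: "sg (s(q := \<not> s q)) i = (if i = q then - sg s i else sg s i)"
  by (simp add: sg_def)

lemma flip_sum:
  fixes h :: "('n::finite \<Rightarrow> bool) \<Rightarrow> real"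
  assumes "\<And>s. h (s(q := \<not> s q)) = h s"
  shows "(\<Sum>s\<in>UNIV. sg s q * h s) = 0"
proof -
  let ?f = "\<lambda>s::'n\<Rightarrow>bool. s(q := \<not> s q)"
  have "(\<Sum>s\<in>UNIV. sg s q * h s) = (\<Sum>s\<in>UNIV. sg (?f s) q * h (?f s))"
    by (rule sum.reindex_bij_witness[of _ ?f ?f]) auto
  also have "\<dots> = - (\<Sum>s\<in>UNIV. sg s q * h s)"
    by (simp add: sg_flip assms flip: sum_negf)
  finally show ?thesis by simp
qed

lemma pair_sum:
  fixes j k :: "'n::finite"
  assumes "j \<noteq> k"
  shows "(\<Sum>s\<in>UNIV. sg s j * sg s k) = 0"
  using flip_sum[of "\<lambda>s. sg s k" j] assms by (simp add: sg_flip)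

lemma quad_sum:
  fixes j k l p :: "'n::finite"
  assumes "j \<noteq> k" "l \<noteq> p"
  shows "(\<Sum>s\<in>UNIV. sg s j * sg s k * (sg s l * sg s p)) =
     (if (j = l \<and> k = p) \<or> (j = p \<and> k = l) then real (CARD('n \<Rightarrow> bool)) else 0)"
proof (cases "(j = l \<and> k = p) \<or> (j = p \<and> k = l)")
  case True
  then have "\<And>s. sg s j * sg s k * (sg s l * sg s p) = 1"
    by (auto simp: sg_def)
  then show ?thesis using True by simp
next
  case False
  then have "j \<notin> {l,p} \<or> k \<notin> {l,p}" using assms by auto
  then show ?thesis
  proof
    assume "j \<notin> {l,p}"
    then have "l \<noteq> j" "p \<noteq> j" by auto
    then show ?thesis using False assms
      flip_sum[of "\<lambda>s. sg s k * (sg s l * sg s p)" j]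
      by (simp add: sg_flip mult.assoc)
  next
    assume "k \<notin> {l,p}"
    then have "l \<noteq> k" "p \<noteq> k" by auto
    then show ?thesis using False assms
      flip_sum[of "\<lambda>s. sg s j * (sg s l * sg s p)" k]
      by (simp add: sg_flip mult_ac)
  qed
qed

lemma offdiag:
  fixes f :: "'n::finite \<Rightarrow> 'n \<Rightarrow> real"
  shows "(\<Sum>j\<in>UNIV. \<Sum>k\<in>UNIV. if j \<noteq> k then f j k else 0) =
         (\<Sum>j\<in>UNIV. \<Sum>k\<in>UNIV. f j k) - (\<Sum>j\<in>UNIV. f j j)"
proof -
  have "(\<Sum>j\<in>UNIV. \<Sum>k\<in>UNIV. f j k) = (\<Sum>j\<in>UNIV. \<Sum>k\<in>UNIV. (if j \<noteq> k then f j k else 0) + (if j = k then f j k else 0))"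
    by (rule sum.cong[OF refl], rule sum.cong[OF refl]) auto
  also have "\<dots> = (\<Sum>j\<in>UNIV. \<Sum>k\<in>UNIV. if j \<noteq> k then f j k else 0) + (\<Sum>j\<in>UNIV. f j j)"
    by (simp add: sum.distrib)
  finally show ?thesis by simp
qed

lemma swap4:
  fixes f :: "'s \<Rightarrow> 'n \<Rightarrow> 'n \<Rightarrow> 'n \<Rightarrow> 'n \<Rightarrow> real"
  shows "(\<Sum>s\<in>S. \<Sum>j\<in>J. \<Sum>k\<in>J. \<Sum>l\<in>J. \<Sum>p\<in>J. f s j k l p) =
         (\<Sum>j\<in>J. \<Sum>k\<in>J. \<Sum>l\<in>J. \<Sum>p\<in>J. \<Sum>s\<in>S. f s j k l p)"
  apply (rule trans[OF sum.swap])
  apply (rule sum.cong[OF refl])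
  apply (rule trans[OF sum.swap])
  apply (rule sum.cong[OF refl])
  apply (rule trans[OF sum.swap])
  apply (rule sum.cong[OF refl])
  apply (rule trans[OF sum.swap])
  apply (rule refl)
  done

lemma delta2:
  fixes j k :: "'n::finite" and X :: real
  shows "(\<Sum>l\<in>UNIV. \<Sum>p\<in>UNIV. (if l = j \<and> p = k then X else 0) + (if l = k \<and> p = j then X else 0)) = 2 * X"
proof -
  have a: "(\<Sum>p\<in>UNIV. (if l = u \<and> p = v then X else 0)) = (if l = u then X else 0)" for l u v :: 'n
    by (cases "l = u") simp_all
  show ?thesis by (simp only: sum.distrib a) simp
qed

lemma quad_term:
  fixes b :: "'n::finite \<Rightarrow> real" and j k l p :: 'n
  assumes "j \<noteq> k"
  shows "(\<Sum>s\<in>UNIV. (if j \<noteq> k \<and> l \<noteq> p then b j * b k * b l * b p * (sg s j * sg s k * (sg s l * sg s p)) else 0))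
    = (if l = j \<and> p = k then real (CARD('n \<Rightarrow> bool)) * (b j)^2 * (b k)^2 else 0)
     + (if l = k \<and> p = j then real (CARD('n \<Rightarrow> bool)) * (b j)^2 * (b k)^2 else 0)"
proof (cases "l = p")
  case True then show ?thesis using assms by auto
next
  case False
  then have "(\<Sum>s\<in>UNIV. (if j \<noteq> k \<and> l \<noteq> p then b j * b k * b l * b p * (sg s j * sg s k * (sg s l * sg s p)) else 0))
     = b j * b k * b l * b p * (\<Sum>s\<in>UNIV. sg s j * sg s k * (sg s l * sg s p))"
    using assms by (simp add: sum_distrib_left)
  also have "\<dots> = (if l = j \<and> p = k then real (CARD('n \<Rightarrow> bool)) * (b j)^2 * (b k)^2 else 0)
     + (if l = k \<and> p = j then real (CARD('n \<Rightarrow> bool)) * (b j)^2 * (b k)^2 else 0)"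
    using assms False by (simp only: quad_sum[OF assms False]) (auto simp: power2_eq_square)
  finally show ?thesis .
qed

lemma fourth_moment:
  fixes b :: "'n::finite \<Rightarrow> real"
  defines "N \<equiv> real (CARD('n \<Rightarrow> bool))"
  shows "(\<Sum>s\<in>UNIV. (\<Sum>j\<in>UNIV. b j * sg s j) ^ 4) =
     N * (3 * (\<Sum>j\<in>UNIV. (b j)^2)^2 - 2 * (\<Sum>j\<in>UNIV. (b j)^4))"
proof -
  define S2 where "S2 = (\<Sum>j\<in>UNIV. (b j)^2)"
  define S4 where "S4 = (\<Sum>j\<in>UNIV. (b j)^4)"
  define G where "G s = (\<Sum>j\<in>UNIV. \<Sum>k\<in>UNIV. if j \<noteq> k then b j * b k * (sg s j * sg s k) else 0)" for s
  have F2: "(\<Sum>j\<in>UNIV. b j * sg s j) ^ 2 = S2 + G s" for s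
  proof -
    have "(\<Sum>j\<in>UNIV. b j * sg s j) ^ 2 = (\<Sum>j\<in>UNIV. \<Sum>k\<in>UNIV. b j * b k * (sg s j * sg s k))"
      by (simp add: power2_eq_square sum_product mult_ac)
    also have "\<dots> = G s + (\<Sum>j\<in>UNIV. b j * b j * (sg s j * sg s j))"
      unfolding G_def by (simp add: offdiag)
    also have "\<dots> = S2 + G s" by (simp add: S2_def power2_eq_square)
    finally show ?thesis .
  qed
  have G1: "(\<Sum>s\<in>UNIV. G s) = 0"
  proof -
    have "(\<Sum>s\<in>UNIV. G s) = (\<Sum>j\<in>UNIV. \<Sum>k\<in>UNIV. \<Sum>s\<in>UNIV. if j \<noteq> k then b j * b k * (sg s j * sg s k) else 0)"
      unfolding G_def
      apply (rule trans[OF sum.swap]) apply (rule sum.cong[OF refl]) apply (rule trans[OF sum.swap]) by (rule refl)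
    also have "\<dots> = 0"
      apply (rule sum.neutral, rule ballI, rule sum.neutral, rule ballI)
      subgoal for x y by (cases "x = y") (simp_all add: pair_sum flip: sum_distrib_left)
      done
    finally show ?thesis .
  qed
  have G2: "(\<Sum>s\<in>UNIV. G s ^ 2) = 2 * N * (S2^2 - S4)"
  proof -
    have "(\<Sum>s\<in>UNIV. G s ^ 2) = (\<Sum>s\<in>UNIV. \<Sum>j\<in>UNIV. \<Sum>k\<in>UNIV. \<Sum>l\<in>UNIV. \<Sum>p\<in>UNIV.
        (if j \<noteq> k \<and> l \<noteq> p then b j * b k * b l * b p * (sg s j * sg s k * (sg s l * sg s p)) else 0))"
      unfolding G_def power2_eq_square sum_distrib_left sum_distrib_right
      by (rule sum.cong[OF refl])+ (auto simp: mult_ac)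
    also have "\<dots> = (\<Sum>j\<in>UNIV. \<Sum>k\<in>UNIV. \<Sum>l\<in>UNIV. \<Sum>p\<in>UNIV. \<Sum>s\<in>UNIV.
        (if j \<noteq> k \<and> l \<noteq> p then b j * b k * b l * b p * (sg s j * sg s k * (sg s l * sg s p)) else 0))"
      by (rule swap4)
    also have "\<dots> = (\<Sum>j\<in>UNIV. \<Sum>k\<in>UNIV. if j \<noteq> k then \<Sum>l\<in>UNIV. \<Sum>p\<in>UNIV.
         (if l = j \<and> p = k then N * (b j)^2 * (b k)^2 else 0) + (if l = k \<and> p = j then N * (b j)^2 * (b k)^2 else 0) else 0)"
    proof (rule sum.cong[OF refl], rule sum.cong[OF refl])
      fix j k :: 'n
      show "(\<Sum>l\<in>UNIV. \<Sum>p\<in>UNIV. \<Sum>s\<in>UNIV.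
        (if j \<noteq> k \<and> l \<noteq> p then b j * b k * b l * b p * (sg s j * sg s k * (sg s l * sg s p)) else 0))
        = (if j \<noteq> k then \<Sum>l\<in>UNIV. \<Sum>p\<in>UNIV.
         (if l = j \<and> p = k then N * (b j)^2 * (b k)^2 else 0) + (if l = k \<and> p = j then N * (b j)^2 * (b k)^2 else 0) else 0)"
      proof (cases "j = k")
        case True then show ?thesis by simp
      next
        case False
        show ?thesis
          unfolding N_def by (subst if_P[OF False]) (simp only: quad_term[OF False])
      qed
    qed
    also have "\<dots> = (\<Sum>j\<in>UNIV. \<Sum>k\<in>UNIV. if j \<noteq> k then 2 * N * ((b j)^2 * (b k)^2) else 0)"
      by (rule sum.cong[OF refl], rule sum.cong[OF refl]) (simp only: delta2, simp)
    also have "\<dots> = 2 * N * (S2^2 - S4)"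
      by (simp add: offdiag S2_def S4_def power2_eq_square sum_product flip: sum_distrib_left)
         (simp add: algebra_simps power4_eq_xxxx)
    finally show ?thesis .
  qed
  have "(\<Sum>s\<in>UNIV. (\<Sum>j\<in>UNIV. b j * sg s j) ^ 4) = (\<Sum>s\<in>UNIV. S2^2 + 2 * S2 * G s + G s ^ 2)"
  proof (rule sum.cong[OF refl])
    fix s
    have "(\<Sum>j\<in>UNIV. b j * sg s j) ^ 4 = ((\<Sum>j\<in>UNIV. b j * sg s j) ^ 2)^2" by simp
    then show "(\<Sum>j\<in>UNIV. b j * sg s j) ^ 4 = S2^2 + 2 * S2 * G s + G s ^ 2"
      by (simp only: F2) (simp add: power2_eq_square algebra_simps)
  qed
  also have "\<dots> = N * S2^2 + 2 * S2 * (\<Sum>s\<in>UNIV. G s) + (\<Sum>s\<in>UNIV. G s ^ 2)"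
    by (simp add: sum.distrib N_def sum_distrib_left)
  also have "\<dots> = N * (3 * S2^2 - 2 * S4)"
    by (simp add: G1 G2 algebra_simps)
  finally show ?thesis by (simp add: S2_def S4_def)
qed

lemma powr4_pow: "0 \<le> (u::real) \<Longrightarrow> (u powr (1/4)) ^ 4 = u"
  by (cases "u = 0") (simp_all add: powr_power)

lemma powr2_pow: "0 \<le> (u::real) \<Longrightarrow> (u powr (1/2)) ^ 4 = u^2"
proof -
  assume "0 \<le> u"
  then have "(u powr (1/2)) ^ 4 = ((u powr (1/2))^2)^2" by simp
  also have "(u powr (1/2))^2 = u" using \<open>0 \<le> u\<close> by (cases "u = 0") (simp_all add: powr_power)
  finally show ?thesis .
qed

lemma epn4: "exp_pnorm 4 (v::real^'n::finite) = ((\<Sum>j\<in>UNIV. (v$j)^4) / real CARD('n)) powr (1/4)"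
proof -
  have "\<bar>t\<bar> powr 4 = t^4" for t :: real
    using powr_numeral[of "\<bar>t\<bar>" "num.Bit0 (num.Bit0 num.One)"] by simp
  then show ?thesis unfolding exp_pnorm_def by simp
qed

lemma epn2: "exp_pnorm 2 (v::real^'n::finite) = ((\<Sum>j\<in>UNIV. (v$j)^2) / real CARD('n)) powr (1/2)"
proof -
  have "\<bar>t\<bar> powr 2 = t^2" for t :: real
    using powr_numeral[of "\<bar>t\<bar>" "num.Bit0 num.One"] by simp
  then show ?thesis unfolding exp_pnorm_def by simp
qed

lemma sumsq_pos: "(x::real^'n::finite) \<noteq> 0 \<Longrightarrow> 0 < (\<Sum>j\<in>UNIV. (x$j)^2)"
proof -
  assume "x \<noteq> 0"
  then obtain j where "x$j \<noteq> 0" by (metis vec_eq_iff zero_index)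
  then show ?thesis
    by (intro sum_pos2[where i=j]) auto
qed


theorem lemma7p4:
  fixes a :: "'m::finite \<Rightarrow> real ^ 'n::finite"
  assumes "(\<Sum>i\<in>UNIV. (exp_pnorm 2 (a i)) ^ 4) / real CARD('m) \<ge> 1"
  shows "norm_2_to_4 ((\<chi> i j. a i $ j / sqrt (real CARD('n))) :: real ^ 'n ^ 'm)
           \<ge> (3 / (1 + 2 / real CARD('n))) powr (1 / 4)"
proof -
  define n where "n = real CARD('n)"
  define m where "m = real CARD('m)"
  define A where "A = ((\<chi> i j. a i $ j / sqrt (real CARD('n))) :: real ^ 'n ^ 'm)"
  define ip where "ip i x = (\<Sum>j\<in>UNIV. a i $ j * x $ j)" for i x
  define P where "P x = (\<Sum>i\<in>UNIV. (ip i x)^4)" for x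
  define Q where "Q x = (\<Sum>j\<in>UNIV. ((x::real^'n) $ j)^2)" for x
  define R where "R i = (\<Sum>j\<in>UNIV. (a i $ j)^2)" for i
  define r where "r x = exp_pnorm 4 (A *v x) / exp_pnorm 2 x" for x
  have n_pos: "n > 0" and m_pos: "m > 0" by (simp_all add: n_def m_def)
  have Q_nn: "Q x \<ge> 0" for x unfolding Q_def by (simp add: sum_nonneg)
  have R_nn: "R i \<ge> 0" for i unfolding R_def by (simp add: sum_nonneg)
  have P_nn: "P x \<ge> 0" for x unfolding P_def by (simp add: sum_nonneg)
  have Av: "(A *v x) $ i = ip i x / sqrt n" for x i
    unfolding A_def ip_def n_def matrix_vector_mult_def by (simp add: sum_divide_distrib)
  have sq4: "sqrt n ^ 4 = n^2" using n_pos
    by (metis (no_types, lifting) less_imp_le numeral_Bit0 power_add real_sqrt_pow2 power2_eq_square)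
  have num4: "exp_pnorm 4 (A *v x) ^ 4 = P x / (n^2 * m)" for x
  proof -
    have "exp_pnorm 4 (A *v x) ^ 4 = (\<Sum>i\<in>UNIV. ((A *v x) $ i)^4) / m"
      unfolding epn4 m_def by (rule powr4_pow) (simp add: sum_nonneg)
    also have "\<dots> = P x / (n^2 * m)"
      unfolding Av P_def using sq4 by (simp add: power_divide sum_divide_distrib)
    finally show ?thesis .
  qed
  have den4: "exp_pnorm 2 x ^ 4 = (Q x / n)^2" for x
    unfolding epn2 Q_def n_def by (rule powr2_pow) (simp add: sum_nonneg)
  have r4: "r x ^ 4 = P x / (m * (Q x)^2)" if "x \<noteq> 0" for x
  proof -
    have "Q x > 0" using sumsq_pos[OF that] by (simp add: Q_def)
    have "r x ^ 4 = (P x / (n^2 * m)) / ((Q x / n)^2)"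
      unfolding r_def power_divide num4 den4 ..
    also have "\<dots> = P x / (m * (Q x)^2)" using n_pos m_pos \<open>Q x > 0\<close>
      by (simp add: field_simps power2_eq_square)
    finally show ?thesis .
  qed
  have r_nn: "r x \<ge> 0" for x unfolding r_def exp_pnorm_def by simp
  define M where "M = (\<Sum>i\<in>UNIV. (R i)^2) / m"
  have P_le: "P x \<le> (\<Sum>i\<in>UNIV. (R i)^2) * (Q x)^2" for x
  proof -
    have "(ip i x)^4 \<le> (R i)^2 * (Q x)^2" for i
    proof -
      have ipi: "ip i x = a i \<bullet> x" unfolding ip_def inner_vec_def by simp
      have "\<bar>ip i x\<bar> \<le> norm (a i) * norm x" unfolding ipi by (rule Cauchy_Schwarz_ineq2)
      then have "\<bar>ip i x\<bar>^4 \<le> (norm (a i) * norm x)^4" by (rule power_mono) simp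
      moreover have "norm (a i)^2 = R i" "norm x ^2 = Q x"
        unfolding R_def Q_def power2_norm_eq_inner inner_vec_def by (simp_all add: power2_eq_square)
      ultimately show ?thesis
        by (simp add: power_mult_distrib power_even_abs_numeral)
           (metis power_mult power_mult_distrib numeral_Bit0 mult_2_right)
    qed
    then show ?thesis unfolding P_def sum_distrib_right by (rule sum_mono)
  qed
  have r_le: "r x \<le> M + 1" if "x \<noteq> 0" for x
  proof -
    have "Q x > 0" using sumsq_pos[OF that] by (simp add: Q_def)
    have "r x ^ 4 \<le> M" unfolding r4[OF that] M_def using P_le[of x] m_pos \<open>Q x > 0\<close>
      by (simp add: divide_simps mult_ac)
    show ?thesis
    proof (cases "r x \<le> 1")
      case True then show ?thesis using \<open>r x ^ 4 \<le> M\<close> r_nn[of x]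
        by (smt (verit) zero_le_power)
    next
      case False
      then have "r x \<le> r x ^ 4" by (simp add: power_increasing[of 1 4 "r x", simplified])
      then show ?thesis using \<open>r x ^ 4 \<le> M\<close> by simp
    qed
  qed
  have bdd: "bdd_above {exp_pnorm 4 (A *v x) / exp_pnorm 2 x | x. x \<noteq> 0}"
    by (rule bdd_aboveI[where M = "M + 1"]) (auto simp: r_le[unfolded r_def])
  have key: "\<exists>x. x \<noteq> 0 \<and> 3 * n * m * (Q x)^2 \<le> P x * (n + 2)"
  proof (rule ccontr)
    assume H0: "\<not> ?thesis"
    have H: "P x * (n + 2) < 3 * n * m * (Q x)^2" if "x \<noteq> 0" for x
      using H0 that by (auto simp: not_le)
    define N where "N = real CARD('n \<Rightarrow> bool)"
    define v where "v s = ((\<chi> j. sg s j) :: real^'n)" for s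
    define e where "e j = (axis j 1 :: real^'n)" for j
    have N_pos: "N > 0" unfolding N_def by simp
    have v0: "v s \<noteq> 0" for s
    proof
      assume "v s = 0"
      then have "v s $ undefined = 0" by simp
      then show False by (simp add: v_def sg_def split: if_splits)
    qed
    have e0: "e j \<noteq> 0" for j unfolding e_def by (simp add: axis_eq_0_iff)
    have sgsq: "(sg s j)^2 = 1" for s j by (simp add: sg_def)
    have Qv: "Q (v s) = n" for s unfolding Q_def v_def n_def by (simp add: sgsq)
    have Qe: "Q (e j) = 1" for j unfolding Q_def e_def axis_def
      by (simp add: if_distrib[of "\<lambda>x. x^2"] cong: if_cong)
    have ipv: "ip i (v s) = (\<Sum>j\<in>UNIV. a i $ j * sg s j)" for i s
      unfolding ip_def v_def by simp
    have ipe: "ip i (e j) = a i $ j" for i j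
      unfolding ip_def e_def axis_def by (simp add: if_distrib[of "\<lambda>x. _ * x"] cong: if_cong)
    have sumv: "(\<Sum>s\<in>UNIV. P (v s)) = (\<Sum>i\<in>UNIV. N * (3 * (R i)^2 - 2 * (\<Sum>j\<in>UNIV. (a i $ j)^4)))"
      unfolding P_def ipv R_def N_def
      by (subst sum.swap) (simp add: fourth_moment)
    have sume: "(\<Sum>j\<in>UNIV. P (e j)) = (\<Sum>i\<in>UNIV. (\<Sum>j\<in>UNIV. (a i $ j)^4))"
      unfolding P_def ipe by (rule sum.swap)
    have tot: "(\<Sum>s\<in>UNIV. P (v s)) + 2 * N * (\<Sum>j\<in>UNIV. P (e j)) = 3 * N * (\<Sum>i\<in>UNIV. (R i)^2)"
      unfolding sumv sume
      by (simp add: sum_distrib_left sum_subtractf sum.distrib algebra_simps flip: sum_distrib_left)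
    have lt1: "(\<Sum>s\<in>UNIV. P (v s) * (n + 2)) < (\<Sum>s\<in>(UNIV::('n\<Rightarrow>bool) set). 3 * n * m * n^2)"
      by (rule sum_strict_mono) (auto intro: H[OF v0, unfolded Qv])
    have le2: "(\<Sum>j\<in>UNIV. P (e j) * (n + 2)) \<le> (\<Sum>j\<in>(UNIV::'n set). 3 * n * m)"
      by (rule sum_mono) (use H[OF e0, unfolded Qe] in \<open>auto intro: less_imp_le\<close>)
    have "(n + 2) * (3 * N * (\<Sum>i\<in>UNIV. (R i)^2)) < 3 * n * m * n^2 * N + 2 * N * (n * (3 * n * m))"
    proof -
      have "(n + 2) * (3 * N * (\<Sum>i\<in>UNIV. (R i)^2)) =
          (\<Sum>s\<in>UNIV. P (v s) * (n + 2)) + 2 * N * (\<Sum>j\<in>UNIV. P (e j) * (n + 2))"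
        unfolding tot[symmetric] sum_distrib_right[symmetric] by (simp add: algebra_simps)
      also have "\<dots> < 3 * n * m * n^2 * N + 2 * N * (n * (3 * n * m))"
      proof -
        have a1: "(\<Sum>s\<in>UNIV. P (v s) * (n + 2)) < 3 * n * m * n^2 * N"
          using lt1 by (simp add: N_def mult.commute)
        have a2: "2 * N * (\<Sum>j\<in>UNIV. P (e j) * (n + 2)) \<le> 2 * N * (n * (3 * n * m))"
          using mult_left_mono[OF le2, of "2 * N"] N_pos by (simp add: n_def)
        show ?thesis using a1 a2 by linarith
      qed
      finally show ?thesis .
    qed
    then have "(n + 2) * (3 * N * (\<Sum>i\<in>UNIV. (R i)^2)) < (n + 2) * (3 * N * (m * n^2))"
      by (simp add: algebra_simps power2_eq_square)
    then have lt: "(\<Sum>i\<in>UNIV. (R i)^2) < m * n^2"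
      using n_pos N_pos by (simp add: mult_less_cancel_left_pos)
    have "exp_pnorm 2 (a i) ^ 4 = (R i / n)^2" for i
      using den4[of "a i"] by (simp add: Q_def R_def)
    then have "(\<Sum>i\<in>UNIV. (R i / n)^2) / m \<ge> 1" using assms by (simp add: m_def)
    then have "1 \<le> (\<Sum>i\<in>UNIV. (R i)^2) / (m * n^2)" using m_pos
      by (simp add: power_divide sum_divide_distrib[symmetric] field_simps)
    then have "(\<Sum>i\<in>UNIV. (R i)^2) \<ge> m * n^2" using n_pos m_pos by (simp add: le_divide_eq)
    then show False using lt by simp
  qed
  then obtain x where x0: "x \<noteq> 0" and xk: "3 * n * m * (Q x)^2 \<le> P x * (n + 2)" by blast
  have "Q x > 0" using sumsq_pos[OF x0] by (simp add: Q_def)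
  define t where "t = (3 / (1 + 2 / n)) powr (1 / 4)"
  have t4: "t ^ 4 = 3 / (1 + 2 / n)" unfolding t_def using n_pos by (intro powr4_pow) simp
  have "3 / (1 + 2 / n) = 3 * n / (n + 2)"
    using n_pos by (simp add: field_simps)
  also have "\<dots> = (3 * n) * (m * (Q x)^2) / ((n + 2) * (m * (Q x)^2))"
    using m_pos \<open>Q x > 0\<close> by simp
  also have "\<dots> = 3 * n * m * (Q x)^2 / ((n + 2) * (m * (Q x)^2))"
    by (simp add: mult_ac)
  also have "\<dots> \<le> P x * (n + 2) / ((n + 2) * (m * (Q x)^2))"
    using xk n_pos m_pos \<open>Q x > 0\<close> by (intro divide_right_mono) simp_all
  also have "\<dots> = r x ^ 4" using r4[OF x0] n_pos by simp
  finally have "t ^ 4 \<le> r x ^ 4" using t4 by simp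
  then have "t ^ Suc 3 \<le> r x ^ Suc 3" by simp
  then have "t \<le> r x" using r_nn[of x] by (rule power_le_imp_le_base)
  also have "r x \<le> norm_2_to_4 A"
    unfolding norm_2_to_4_def r_def using x0 by (intro cSup_upper bdd) auto
  finally show ?thesis unfolding t_def n_def A_def .
qed
end
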